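(* Let $A\in\mathbb Z^{d\times n}$ with $\ker(A)\cap\mathbb N^n=\{0\}$ and let $B\subseteq\ker(A)$. If $B$ is distance reducing, then for every $z\in D(A)$ we have $z\in B$ or $-z\in B$. If $B$ is strongly distance reducing, then for every $z\in D^w(A)$ we have $z\in B$ or $-z\in B$.
   Context: For $z\in\mathbb Z^n$, $z^\pm\in\mathbb N^n$ are the unique vectors with disjoint supports and $z=z^+-z^-$; $\|\cdot\|$ is the $1$-norm; $\le$ on $\mathbb N^n$ is coordinatewise. For $z\in\ker(A)$, a positive (resp. negative) distance decomposition is $z=u+v$ with $u,v\in\ker(A)\setminus\{0\}$, $u^+\le z^+$ (resp. $u^-\le z^-$) and $\|v\|<\|z\|$. $D^+(A)$ (resp. $D^-(A)$) is the set of nonzero $z\in\ker(A)$ with no positive (resp. negative) distance decomposition; $D(A)=D^+(A)\cap D^-(A)$, $D^w(A)=D^+(A)\cup D^-(A)$. For nonzero $z\in\ker(A)$: $u$ reduces $z$ from $z^+$ if some $\varepsilon\in\{\pm1\}$ has $z^++\varepsilon u\in\mathbb N^n$ and $\|z^++\varepsilon u-z^-\|<\|z\|$; from $z^-$ if some $\varepsilon$ has $z^-+\varepsilon u\in\mathbb N^n$ and $\|z^+-(z^-+\varepsilon u)\|<\|z\|$. $B$ is distance reducing if every nonzero $z\in\ker(A)$ is reduced from $z^+$ or $z^-$ by some element of $B$; strongly distance reducing if every such $z$ is reduced from $z^+$ by some element of $B$ and from $z^-$ by some (possibly different) element of $B$. *)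

theory Defs
  imports "HOL-Analysis.Analysis"
begin

definition kerZ :: "int ^ 'n ^ 'd \<Rightarrow> (int ^ 'n) set" where
  "kerZ A = {z. A *v z = 0}"

definition posp :: "int ^ 'n \<Rightarrow> int ^ 'n" where
  "posp z = (\<chi> i. max (z $ i) 0)"

definition negp :: "int ^ 'n \<Rightarrow> int ^ 'n" where
  "negp z = (\<chi> i. max (- (z $ i)) 0)"

definition norm1 :: "int ^ 'n \<Rightarrow> int" where
  "norm1 z = (\<Sum>i\<in>UNIV. \<bar>z $ i\<bar>)"

definition nonneg :: "int ^ 'n \<Rightarrow> bool" where
  "nonneg z \<longleftrightarrow> (\<forall>i. 0 \<le> z $ i)"

definition pos_dist_decomp :: "int ^ 'n ^ 'd \<Rightarrow> int ^ 'n \<Rightarrow> bool" where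
  "pos_dist_decomp A z \<longleftrightarrow> (\<exists>u v. z = u + v \<and> u \<in> kerZ A - {0} \<and> v \<in> kerZ A - {0}
      \<and> posp u \<le> posp z \<and> norm1 v < norm1 z)"

definition neg_dist_decomp :: "int ^ 'n ^ 'd \<Rightarrow> int ^ 'n \<Rightarrow> bool" where
  "neg_dist_decomp A z \<longleftrightarrow> (\<exists>u v. z = u + v \<and> u \<in> kerZ A - {0} \<and> v \<in> kerZ A - {0}
      \<and> negp u \<le> negp z \<and> norm1 v < norm1 z)"

definition Dplus :: "int ^ 'n ^ 'd \<Rightarrow> (int ^ 'n) set" where
  "Dplus A = {z. z \<in> kerZ A \<and> z \<noteq> 0 \<and> \<not> pos_dist_decomp A z}"

definition Dminus :: "int ^ 'n ^ 'd \<Rightarrow> (int ^ 'n) set" where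
  "Dminus A = {z. z \<in> kerZ A \<and> z \<noteq> 0 \<and> \<not> neg_dist_decomp A z}"

definition Dset :: "int ^ 'n ^ 'd \<Rightarrow> (int ^ 'n) set" where
  "Dset A = Dplus A \<inter> Dminus A"

definition Dweak :: "int ^ 'n ^ 'd \<Rightarrow> (int ^ 'n) set" where
  "Dweak A = Dplus A \<union> Dminus A"

definition reduces_from_pos :: "int ^ 'n \<Rightarrow> int ^ 'n \<Rightarrow> bool" where
  "reduces_from_pos u z \<longleftrightarrow> (\<exists>\<epsilon>\<in>{1, -1::int}. nonneg (posp z + \<epsilon> *s u)
      \<and> norm1 (posp z + \<epsilon> *s u - negp z) < norm1 z)"

definition reduces_from_neg :: "int ^ 'n \<Rightarrow> int ^ 'n \<Rightarrow> bool" where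
  "reduces_from_neg u z \<longleftrightarrow> (\<exists>\<epsilon>\<in>{1, -1::int}. nonneg (negp z + \<epsilon> *s u)
      \<and> norm1 (posp z - (negp z + \<epsilon> *s u)) < norm1 z)"

definition distance_reducing :: "int ^ 'n ^ 'd \<Rightarrow> (int ^ 'n) set \<Rightarrow> bool" where
  "distance_reducing A B \<longleftrightarrow> (\<forall>z\<in>kerZ A - {0}.
      (\<exists>u\<in>B. reduces_from_pos u z) \<or> (\<exists>u\<in>B. reduces_from_neg u z))"

definition strongly_distance_reducing :: "int ^ 'n ^ 'd \<Rightarrow> (int ^ 'n) set \<Rightarrow> bool" where
  "strongly_distance_reducing A B \<longleftrightarrow> (\<forall>z\<in>kerZ A - {0}.
      (\<exists>u\<in>B. reduces_from_pos u z) \<and> (\<exists>u\<in>B. reduces_from_neg u z))"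

end

theory Submission
  imports Defs
begin

lemma pn_eq: "posp z - negp z = z"
  by (simp add: vec_eq_iff posp_def negp_def max_def)

lemma mv_neg: "(A :: int ^ 'n ^ 'd) *v (- u) = - (A *v u)"
  by (simp add: vec_eq_iff matrix_vector_mult_def sum_negf)

lemma mv_diff: "(A :: int ^ 'n ^ 'd) *v (z - u) = A *v z - A *v u"
  by (simp add: vec_eq_iff matrix_vector_mult_def sum_subtractf right_diff_distrib)

lemma eps_cases:
  assumes "\<epsilon> \<in> {1, -1::int}"
  shows "\<epsilon> *s u = u \<or> \<epsilon> *s u = - u"
  using assms by (auto simp: vec_eq_iff)

lemma pos_case:
  assumes z: "z \<in> Dplus A" and u: "u \<in> kerZ A" and r: "reduces_from_pos u z"
  shows "z = u \<or> z = - u"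
proof -
  from r obtain \<epsilon> where e: "\<epsilon> \<in> {1, -1::int}" "nonneg (posp z + \<epsilon> *s u)"
    "norm1 (posp z + \<epsilon> *s u - negp z) < norm1 z"
    unfolding reduces_from_pos_def by blast
  obtain e where ee: "e = u \<or> e = - u" "nonneg (posp z + e)" "norm1 (posp z + e - negp z) < norm1 z"
    using e eps_cases[OF e(1), of u] by metis
  have w: "posp z + e - negp z = z + e"
    using pn_eq[of z] by (metis add.commute diff_add_eq)
  have zk: "z \<in> kerZ A" "z \<noteq> 0" "\<not> pos_dist_decomp A z" using z by (auto simp: Dplus_def)
  have ek: "e \<in> kerZ A" using ee(1) u by (auto simp: kerZ_def mv_neg)
  show ?thesis
  proof (cases "z + e = 0")
    case True
    then have "z = - e" by (simp add: eq_neg_iff_add_eq_0)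
    then show ?thesis using ee(1) by auto
  next
    case False
    have e0: "e \<noteq> 0" using ee(3) pn_eq[of z] by auto
    have "pos_dist_decomp A z"
      unfolding pos_dist_decomp_def
    proof (intro exI conjI)
      show "z = - e + (z + e)" by simp
      show "- e \<in> kerZ A - {0}" using ek e0 by (auto simp: kerZ_def mv_neg)
      show "z + e \<in> kerZ A - {0}" using ek zk False by (auto simp: kerZ_def matrix_vector_right_distrib)
      show "posp (- e) \<le> posp z"
        unfolding less_eq_vec_def
      proof
        fix i have "0 \<le> (posp z + e) $ i" using ee(2) nonneg_def by blast
        then show "posp (- e) $ i \<le> posp z $ i" by (simp add: posp_def)
      qed
      show "norm1 (z + e) < norm1 z" using ee(3) w by simp
    qed
    then show ?thesis using zk by blast
  qed
qed

lemma neg_case: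
  assumes z: "z \<in> Dminus A" and u: "u \<in> kerZ A" and r: "reduces_from_neg u z"
  shows "z = u \<or> z = - u"
proof -
  from r obtain \<epsilon> where e: "\<epsilon> \<in> {1, -1::int}" "nonneg (negp z + \<epsilon> *s u)"
    "norm1 (posp z - (negp z + \<epsilon> *s u)) < norm1 z"
    unfolding reduces_from_neg_def by blast
  obtain e where ee: "e = u \<or> e = - u" "nonneg (negp z + e)" "norm1 (posp z - (negp z + e)) < norm1 z"
    using e eps_cases[OF e(1), of u] by metis
  have w: "posp z - (negp z + e) = z - e"
    using pn_eq[of z] by (metis diff_diff_eq)
  have zk: "z \<in> kerZ A" "z \<noteq> 0" "\<not> neg_dist_decomp A z" using z by (auto simp: Dminus_def)
  have ek: "e \<in> kerZ A" using ee(1) u by (auto simp: kerZ_def mv_neg)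
  show ?thesis
  proof (cases "z - e = 0")
    case True
    then have "z = e" by simp
    then show ?thesis using ee(1) by auto
  next
    case False
    have e0: "e \<noteq> 0" using ee(3) pn_eq[of z] by auto
    have "neg_dist_decomp A z"
      unfolding neg_dist_decomp_def
    proof (intro exI conjI)
      show "z = e + (z - e)" by simp
      show "e \<in> kerZ A - {0}" using ek e0 by (auto simp: kerZ_def)
      show "z - e \<in> kerZ A - {0}" using ek zk False by (auto simp: kerZ_def mv_diff)
      show "negp e \<le> negp z"
        unfolding less_eq_vec_def
      proof
        fix i have "0 \<le> (negp z + e) $ i" using ee(2) nonneg_def by blast
        then show "negp e $ i \<le> negp z $ i" by (simp add: negp_def)
      qed
      show "norm1 (z - e) < norm1 z" using ee(3) w by simp
    qed
    then show ?thesis using zk by blast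
  qed
qed

theorem proposition8p4:
  fixes A :: "int ^ 'n ^ 'd" and B :: "(int ^ 'n) set"
  assumes pointed: "\<forall>z \<in> kerZ A. nonneg z \<longrightarrow> z = 0"
    and BsubK: "B \<subseteq> kerZ A"
  shows "(distance_reducing A B \<longrightarrow> (\<forall>z\<in>Dset A. z \<in> B \<or> - z \<in> B))
       \<and> (strongly_distance_reducing A B \<longrightarrow> (\<forall>z\<in>Dweak A. z \<in> B \<or> - z \<in> B))"
proof (intro conjI impI ballI)
  fix z assume dr: "distance_reducing A B" and z: "z \<in> Dset A"
  have zk: "z \<in> kerZ A - {0}" using z by (auto simp: Dset_def Dplus_def)
  from dr zk have "(\<exists>u\<in>B. reduces_from_pos u z) \<or> (\<exists>u\<in>B. reduces_from_neg u z)"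
    unfolding distance_reducing_def by blast
  then show "z \<in> B \<or> - z \<in> B"
  proof
    assume "\<exists>u\<in>B. reduces_from_pos u z"
    then obtain u where "u \<in> B" "reduces_from_pos u z" by blast
    moreover then have "u \<in> kerZ A" using BsubK by blast
    ultimately have "z = u \<or> z = - u" using pos_case[of z A u] z unfolding Dset_def by blast
    then show ?thesis using \<open>u \<in> B\<close> by auto
  next
    assume "\<exists>u\<in>B. reduces_from_neg u z"
    then obtain u where "u \<in> B" "reduces_from_neg u z" by blast
    moreover then have "u \<in> kerZ A" using BsubK by blast
    ultimately have "z = u \<or> z = - u" using neg_case[of z A u] z unfolding Dset_def by blast
    then show ?thesis using \<open>u \<in> B\<close> by auto
  qed
next
  fix z assume dr: "strongly_distance_reducing A B" and z: "z \<in> Dweak A"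
  have zk: "z \<in> kerZ A - {0}" using z by (auto simp: Dweak_def Dplus_def Dminus_def)
  from dr zk have "(\<exists>u\<in>B. reduces_from_pos u z) \<and> (\<exists>u\<in>B. reduces_from_neg u z)"
    unfolding strongly_distance_reducing_def by blast
  then obtain u1 u2 where u: "u1 \<in> B" "reduces_from_pos u1 z" "u2 \<in> B" "reduces_from_neg u2 z"
    by blast
  show "z \<in> B \<or> - z \<in> B"
  proof (cases "z \<in> Dplus A")
    case True
    moreover have "u1 \<in> kerZ A" using u BsubK by blast
    ultimately have "z = u1 \<or> z = - u1" using pos_case[of z A u1] u by blast
    then show ?thesis using u by auto
  next
    case False
    then have "z \<in> Dminus A" using z by (auto simp: Dweak_def)
    moreover have "u2 \<in> kerZ A" using u BsubK by blast
    ultimately have "z = u2 \<or> z = - u2" using neg_case[of z A u2] u by blast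
    then show ?thesis using u by auto
  qed
qed

end
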